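(* Let $(\mathrm{Con},\sqsubseteq,(s_i)_{i \in G})$ be a spatial constraint system whose underlying lattice $(\mathrm{Con},\sqsubseteq)$ is completely distributive. For $K \subseteq G$ define $\delta^+_K : \mathrm{Con} \to \mathrm{Con}$ by \[ \delta^+_K(c) = \bigwedge\left\{ \bigsqcup_{k \in K} s_k(a_k) \;\middle|\; (a_k)_{k \in K} \in \mathrm{Con}^K \text{ and } \bigsqcup_{k \in K} a_k \sqsupseteq c \right\}. \] Then, for any $K \subseteq G$, $\delta^+_K$ is a space function.
   Context: A constraint system is a complete lattice $(\mathrm{Con}, \sqsubseteq)$ with join $\sqcup$ (and $\bigsqcup$ for arbitrary joins), bottom $\mathit{true}$; $\bigwedge$ denotes the greatest lower bound (meet) of a set in $(\mathrm{Con},\sqsubseteq)$, and $c \sqsupseteq d$ means $d \sqsubseteq c$. A space function is a continuous self-map $f:\mathrm{Con}\to\mathrm{Con}$ (i.e., preserving joins of directed sets) such that $f(\mathit{true})=\mathit{true}$ and $f(c \sqcup d) = f(c) \sqcup f(d)$ for all $c,d$. A spatial constraint system $(\mathrm{Con},\sqsubseteq,(s_i)_{i \in G})$ is a constraint system equipped with a space function $s_i$ for each agent $i$ of a possibly infinite set $G$. $\mathrm{Con}^K$ is the set of $K$-tuples, i.e., functions $K \to \mathrm{Con}$. A lattice is completely distributive if it is complete and for any doubly indexed family $\{x_{ij}\}_{i\in I, j \in J_i}$, $\bigsqcup_{i\in I}\bigwedge_{j\in J_i} x_{ij} = \bigwedge_{f\in F}\bigsqcup_{i \in I} x_{i f(i)}$,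 where $F$ is the class of choice functions $f$ with $f(i)\in J_i$. *)

theory Defs
  imports Main
begin

(* Con is modelled as a type 'c of class complete_lattice:
   \<sqsubseteq> = \<le>, \<squnion> = sup, \<Squnion> = Sup, \<And> = Inf, true = bot. *)

definition directed_set :: "'c::complete_lattice set \<Rightarrow> bool" where
  "directed_set D \<longleftrightarrow> D \<noteq> {} \<and> (\<forall>x\<in>D. \<forall>y\<in>D. \<exists>z\<in>D. x \<le> z \<and> y \<le> z)"

definition continuous_map :: "('c::complete_lattice \<Rightarrow> 'c) \<Rightarrow> bool" where
  "continuous_map f \<longleftrightarrow> (\<forall>D. directed_set D \<longrightarrow> f (Sup D) = Sup (f ` D))"

definition space_function :: "('c::complete_lattice \<Rightarrow> 'c) \<Rightarrow> bool" where
  "space_function f \<longleftrightarrow> continuous_map f \<and> f bot = bot \<and>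
     (\<forall>c d. f (sup c d) = sup (f c) (f d))"

definition spatial_cs :: "'g set \<Rightarrow> ('g \<Rightarrow> 'c::complete_lattice \<Rightarrow> 'c) \<Rightarrow> bool" where
  "spatial_cs G s \<longleftrightarrow> (\<forall>i\<in>G. space_function (s i))"

definition completely_distributive_idx ::
    "'i itself \<Rightarrow> 'j itself \<Rightarrow> 'c::complete_lattice itself \<Rightarrow> bool" where
  "completely_distributive_idx _ _ _ \<longleftrightarrow>
     (\<forall>(I::'i set) (J::'i \<Rightarrow> 'j set) (x::'i \<Rightarrow> 'j \<Rightarrow> 'c).
        (SUP i\<in>I. INF j\<in>J i. x i j) =
        (INF f\<in>{f. \<forall>i\<in>I. f i \<in> J i}. SUP i\<in>I. x i (f i)))"

(* We instantiate the index types by 'c set and 'c; since each inner family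
   {x_ij | j \<in> J_i} is a subset of Con, this already covers arbitrary families. *)
definition completely_distributive :: "'c::complete_lattice itself \<Rightarrow> bool" where
  "completely_distributive T \<longleftrightarrow>
     completely_distributive_idx TYPE('c set) TYPE('c) T"

(* Elements of Con^K are represented as functions 'g \<Rightarrow> 'c (values off K are irrelevant). *)
definition delta_plus :: "('g \<Rightarrow> 'c::complete_lattice \<Rightarrow> 'c) \<Rightarrow> 'g set \<Rightarrow> 'c \<Rightarrow> 'c" where
  "delta_plus s K c = Inf {(SUP k\<in>K. s k (a k)) | a. c \<le> (SUP k\<in>K. a k)}"

end

theory Submission
  imports Defs
begin

lemma sf_sup_fin:
  assumes "space_function f" "finite B"
  shows "f (Sup B) = Sup (f ` B)"
  using assms(2)
proof (induction B rule: finite_induct)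
  case empty
  then show ?case using assms(1) by (simp add: space_function_def)
next
  case (insert x B)
  then show ?case using assms(1) by (simp add: space_function_def)
qed

lemma sf_mono:
  assumes "space_function f" "x \<le> y"
  shows "f x \<le> f y"
proof -
  have "f y = sup (f x) (f y)" using assms
    by (metis space_function_def sup.absorb2)
  then show ?thesis by (metis sup.cobounded1)
qed

lemma sf_Sup:
  assumes sf: "space_function f"
  shows "f (Sup A) = Sup (f ` A)"
proof -
  define F where "F = {Sup B | B. finite B \<and> B \<subseteq> A}"
  have dir: "directed_set F"
    unfolding directed_set_def F_def
  proof (intro conjI ballI)
    show "{Sup B |B. finite B \<and> B \<subseteq> A} \<noteq> {}" by blast
  next
    fix x y assume "x \<in> {Sup B |B. finite B \<and> B \<subseteq> A}" "y \<in> {Sup B |B. finite B \<and> B \<subseteq> A}"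
    then obtain B1 B2 where b: "x = Sup B1" "finite B1" "B1 \<subseteq> A" "y = Sup B2" "finite B2" "B2 \<subseteq> A" by blast
    show "\<exists>z\<in>{Sup B |B. finite B \<and> B \<subseteq> A}. x \<le> z \<and> y \<le> z"
      apply (rule bexI[of _ "Sup (B1 \<union> B2)"])
      using b by (auto intro: Sup_subset_mono)
  qed
  have SF: "Sup F = Sup A"
  proof (rule antisym)
    show "Sup F \<le> Sup A" by (rule Sup_least) (auto simp: F_def intro: Sup_subset_mono)
    show "Sup A \<le> Sup F"
    proof (rule Sup_least)
      fix a assume "a \<in> A"
      then have "Sup {a} \<in> F" unfolding F_def by blast
      then show "a \<le> Sup F" by (metis Sup_upper cSup_singleton)
    qed
  qed
  have "f (Sup F) = Sup (f ` F)" using sf dir by (simp add: space_function_def continuous_map_def)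
  also have "\<dots> = Sup (f ` A)"
  proof (rule antisym)
    show "Sup (f ` F) \<le> Sup (f ` A)"
    proof (rule Sup_least)
      fix y assume "y \<in> f ` F"
      then obtain B where B: "y = f (Sup B)" "finite B" "B \<subseteq> A" unfolding F_def by blast
      then have "y = Sup (f ` B)" using sf_sup_fin[OF sf] by simp
      then show "y \<le> Sup (f ` A)" using B by (auto intro: Sup_subset_mono)
    qed
    show "Sup (f ` A) \<le> Sup (f ` F)"
    proof (rule Sup_least)
      fix y assume "y \<in> f ` A"
      then obtain a where a: "a \<in> A" "y = f a" by blast
      then have "Sup {a} \<in> F" unfolding F_def by blast
      then have "f (Sup {a}) \<le> Sup (f ` F)" by (simp add: Sup_upper)
      then show "y \<le> Sup (f ` F)" using a by simp
    qed
  qed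
  finally show ?thesis using SF by simp
qed

lemma cd_use:
  fixes D :: "'c::complete_lattice set" and T :: "'c \<Rightarrow> 'c set"
  assumes "completely_distributive TYPE('c)"
  shows "(SUP d\<in>D. Inf (T d)) = Inf {(SUP d\<in>D. g d) | g. \<forall>d\<in>D. g d \<in> T d}"
proof -
  define I where "I = (\<lambda>d. {d}) ` D"
  define J where "J = (\<lambda>i::'c set. T (the_elem i))"
  have h: "(SUP i\<in>I. INF j\<in>J i. (\<lambda>i j. j) i j) =
        (INF f\<in>{f. \<forall>i\<in>I. f i \<in> J i}. SUP i\<in>I. (\<lambda>i (j::'c). j) i (f i))"
    using assms unfolding completely_distributive_def completely_distributive_idx_def
    apply -
    apply (erule allE[of _ I], erule allE[of _ J], erule allE[of _ "\<lambda>i j. j"])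
    by simp
  have l: "(SUP i\<in>I. INF j\<in>J i. j) = (SUP d\<in>D. Inf (T d))"
    unfolding I_def J_def by (simp add: image_image)
  have r: "(INF f\<in>{f. \<forall>i\<in>I. f i \<in> J i}. SUP i\<in>I. f i) = Inf {(SUP d\<in>D. g d) | g. \<forall>d\<in>D. g d \<in> T d}"
  proof -
    have "(\<lambda>f. SUP i\<in>I. f i) ` {f. \<forall>i\<in>I. f i \<in> J i} = {(SUP d\<in>D. g d) | g. \<forall>d\<in>D. g d \<in> T d}"
    proof (intro equalityI subsetI)
      fix y assume "y \<in> (\<lambda>f. SUP i\<in>I. f i) ` {f. \<forall>i\<in>I. f i \<in> J i}"
      then obtain f where f: "\<forall>i\<in>I. f i \<in> J i" "y = (SUP i\<in>I. f i)" by blast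
      have "y = (SUP d\<in>D. f {d})" using f(2) unfolding I_def by (simp add: image_image)
      moreover have "\<forall>d\<in>D. f {d} \<in> T d" using f(1) unfolding I_def J_def by auto
      ultimately show "y \<in> {(SUP d\<in>D. g d) | g. \<forall>d\<in>D. g d \<in> T d}" by blast
    next
      fix y assume "y \<in> {(SUP d\<in>D. g d) | g. \<forall>d\<in>D. g d \<in> T d}"
      then obtain g where g: "\<forall>d\<in>D. g d \<in> T d" "y = (SUP d\<in>D. g d)" by blast
      define f where "f = (\<lambda>i::'c set. g (the_elem i))"
      have "y = (SUP i\<in>I. f i)" using g(2) unfolding I_def f_def by (simp add: image_image)
      moreover have "\<forall>i\<in>I. f i \<in> J i" using g(1) unfolding I_def J_def f_def by auto
      ultimately show "y \<in> (\<lambda>f. SUP i\<in>I. f i) ` {f. \<forall>i\<in>I. f i \<in> J i}" by blast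
    qed
    then show ?thesis by (simp add: image_image)
  qed
  show ?thesis using h l r by simp
qed

theorem mainTheorem6:
  fixes G :: "'g set" and s :: "'g \<Rightarrow> 'c::complete_lattice \<Rightarrow> 'c" and K :: "'g set"
  assumes "spatial_cs G s"
    and "completely_distributive TYPE('c)"
    and "K \<subseteq> G"
  shows "space_function (delta_plus s K)"
proof -
  have sfk: "\<And>k. k \<in> K \<Longrightarrow> space_function (s k)"
    using assms(1,3) unfolding spatial_cs_def by blast
  define T where "T = (\<lambda>c. {(SUP k\<in>K. s k (a k)) | a. c \<le> (SUP k\<in>K. a k)})"
  have dT: "\<And>c. delta_plus s K c = Inf (T c)" unfolding T_def delta_plus_def by simp
  have mono: "delta_plus s K x \<le> delta_plus s K y" if "x \<le> y" for x y
    unfolding dT T_def using that by (auto intro!: Inf_superset_mono dest: order_trans)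
  have bot: "delta_plus s K bot = bot"
  proof -
    have "(SUP k\<in>K. s k ((\<lambda>_. bot) k)) \<in> T bot" unfolding T_def
      by (rule CollectI, rule exI[where x="\<lambda>_. bot"]) simp
    moreover have "(SUP k\<in>K. s k ((\<lambda>_. bot) k)) = bot"
      using sfk by (simp add: space_function_def)
    ultimately show ?thesis unfolding dT by (metis Inf_lower bot.extremum_uniqueI)
  qed
  have key: "delta_plus s K (Sup D) \<le> Sup (delta_plus s K ` D)" for D
  proof -
    have "Sup (delta_plus s K ` D) = (SUP d\<in>D. Inf (T d))" by (simp add: dT)
    also have "\<dots> = Inf {(SUP d\<in>D. g d) | g. \<forall>d\<in>D. g d \<in> T d}"
      using cd_use[OF assms(2)] by blast
    finally have eq: "Sup (delta_plus s K ` D) = Inf {(SUP d\<in>D. g d) | g. \<forall>d\<in>D. g d \<in> T d}" .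
    have "delta_plus s K (Sup D) \<le> (SUP d\<in>D. g d)" if g: "\<forall>d\<in>D. g d \<in> T d" for g
    proof -
      have "\<forall>d\<in>D. \<exists>a. g d = (SUP k\<in>K. s k (a k)) \<and> d \<le> (SUP k\<in>K. a k)"
        using g unfolding T_def by blast
      then obtain A where A: "\<And>d. d \<in> D \<Longrightarrow> g d = (SUP k\<in>K. s k (A d k)) \<and> d \<le> (SUP k\<in>K. A d k)"
        by metis
      define b where "b = (\<lambda>k. SUP d\<in>D. A d k)"
      have "Sup D \<le> (SUP k\<in>K. b k)"
      proof (rule Sup_least)
        fix d assume d: "d \<in> D"
        have "(SUP k\<in>K. A d k) \<le> (SUP k\<in>K. b k)"
          unfolding b_def using d by (auto intro!: SUP_mono SUP_upper)
        then show "d \<le> (SUP k\<in>K. b k)" using A[OF d] by (meson order_trans)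
      qed
      then have "(SUP k\<in>K. s k (b k)) \<in> T (Sup D)" unfolding T_def by blast
      then have "delta_plus s K (Sup D) \<le> (SUP k\<in>K. s k (b k))" unfolding dT by (rule Inf_lower)
      also have "(SUP k\<in>K. s k (b k)) = (SUP k\<in>K. SUP d\<in>D. s k (A d k))"
        unfolding b_def
      proof (rule SUP_cong[OF refl])
        fix k assume "k \<in> K"
        then have "s k (Sup ((\<lambda>d. A d k) ` D)) = Sup (s k ` (\<lambda>d. A d k) ` D)"
          using sfk sf_Sup by blast
        then show "s k (SUP d\<in>D. A d k) = (SUP d\<in>D. s k (A d k))" by (simp add: image_image)
      qed
      also have "\<dots> = (SUP d\<in>D. SUP k\<in>K. s k (A d k))" by (rule SUP_commute)
      also have "\<dots> = (SUP d\<in>D. g d)" using A by (auto intro!: SUP_cong)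
      finally show ?thesis .
    qed
    then show ?thesis unfolding eq by (auto intro!: Inf_greatest)
  qed
  have supeq: "delta_plus s K (Sup D) = Sup (delta_plus s K ` D)" for D
  proof (rule antisym)
    show "delta_plus s K (Sup D) \<le> Sup (delta_plus s K ` D)" by (rule key)
    show "Sup (delta_plus s K ` D) \<le> delta_plus s K (Sup D)"
      by (auto intro!: Sup_least mono Sup_upper)
  qed
  show ?thesis unfolding space_function_def continuous_map_def
  proof (intro conjI allI impI)
    fix D :: "'c set" show "delta_plus s K (Sup D) = Sup (delta_plus s K ` D)" by (rule supeq)
  next
    show "delta_plus s K bot = bot" by (rule bot)
  next
    fix c d :: 'c
    show "delta_plus s K (sup c d) = sup (delta_plus s K c) (delta_plus s K d)"
      using supeq[of "{c, d}"] by simp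
  qed
qed

end
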